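(* Let $c_m$ be an arbitrary finite sequence of complex numbers, and suppose $r|b^{\infty}$, meaning all the prime factors dividing $r$ also divide $b$. Then \begin{equation*} \sum_{x \bmod b} \Big| \sum_{m \geq 1} c_m S(rx, m ;br) \Big|^2 = b r^2 \sum_{\substack{y \bmod b \\ (y,b)=1}} \Big| \sum_{m \equiv 0 \bmod r} c_{m} e\Big(\frac{y m/r}{b}\Big) \Big|^2, \end{equation*} where $S(a,b;c)$ denotes the classical Kloosterman sum and $e(x)=e^{2\pi i x}$. *)

theory Defs
  imports "HOL-Analysis.Analysis" "HOL-Computational_Algebra.Primes"
begin

definition e :: "real \<Rightarrow> complex" where
  "e x = exp (2 * of_real pi * \<i> * of_real x)"

text \<open>Classical Kloosterman sum S(a,n;c) = sum over x mod c with (x,c)=1 of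
  e((a x + n xbar)/c), where x xbar = 1 mod c. Written as a sum over pairs
  (x, xbar) of residues mod c with x * xbar = 1 mod c (xbar is unique).\<close>
definition kloosterman :: "int \<Rightarrow> int \<Rightarrow> nat \<Rightarrow> complex" where
  "kloosterman a n c =
     (\<Sum>p\<in>{(x, xb). x \<in> {0..<int c} \<and> xb \<in> {0..<int c} \<and> (x * xb) mod int c = 1 mod int c}.
        e (real_of_int (a * fst p + n * snd p) / real c))"

end

theory Submission
  imports Defs "HOL-Number_Theory.Cong"
begin


lemma e_add: "e (x + y) = e x * e y"
  unfolding e_def by (simp add: distrib_left distrib_right exp_add)

lemma e_cnj: "cnj (e x) = e (- x)"
  unfolding e_def by (simp add: exp_cnj)

lemma e_int: "e (of_int k) = 1"
proof -
  have "2 * of_real pi * \<i> * of_real (of_int k) = complex_of_real (2 * real_of_int k * pi) * \<i>"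
    by simp
  then show ?thesis unfolding e_def using exp_integer_2pi[of "real_of_int k"] by (simp add: ac_simps)
qed

lemma e_pow: "e x ^ n = e (real n * x)"
  unfolding e_def by (simp add: exp_of_nat_mult[symmetric] ac_simps)

lemma e_eq_1: "e x = 1 \<Longrightarrow> x \<in> \<int>"
proof -
  assume "e x = 1"
  then obtain n :: int where "2 * pi * x = of_int (2*n) * pi"
    unfolding e_def exp_eq_1 by auto
  then have "x = of_int n" by simp
  then show ?thesis by simp
qed

lemma e_mult_cnj: "e x * cnj (e x) = 1"
  using e_int[of 0] by (simp add: e_cnj e_add[symmetric])

lemma orth:
  assumes q: "q > 0"
  shows "(\<Sum>x\<in>{0..<int q}. e (real_of_int (x * d) / real q)) = (if int q dvd d then of_nat q else 0)"
proof -
  define z where "z = e (real_of_int d / real q)"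
  have "(\<Sum>x\<in>{0..<int q}. e (real_of_int (x * d) / real q)) = (\<Sum>x\<in>{0..<q}. e (real_of_int (int x * d) / real q))"
    by (rule sum.reindex_bij_witness[of _ int nat]) auto
  also have "\<dots> = (\<Sum>x<q. z ^ x)"
    by (intro sum.cong) (auto simp: z_def e_pow atLeast0LessThan)
  also have "\<dots> = (if int q dvd d then of_nat q else 0)"
  proof (cases "int q dvd d")
    case True
    then obtain k where "d = int q * k" by blast
    then have "z = 1" using q by (simp add: z_def e_int[of k, symmetric])
    then show ?thesis using True by (simp add: sum_gp_strict)
  next
    case False
    have "z \<noteq> 1"
    proof
      assume "z = 1"
      then have "real_of_int d / real q \<in> \<int>" unfolding z_def by (rule e_eq_1)
      then obtain k where "real_of_int d / real q = of_int k" by (auto elim: Ints_cases)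
      then have "real_of_int d = of_int (int q * k)" using q by (simp add: field_simps)
      then have "d = int q * k" by linarith
      with False show False by simp
    qed
    moreover have "z ^ q = 1" using q by (simp add: z_def e_pow e_int)
    ultimately show ?thesis using False by (simp add: sum_gp_strict)
  qed
  finally show ?thesis .
qed



lemma resid_set:
  fixes b r :: nat and y :: int
  assumes "b > 0" "0 \<le> y" "y < int b"
  shows "{w\<in>{0..<int (b*r)}. w mod int b = y} = (\<lambda>t. y + int b * t) ` {0..<int r}"
proof (intro set_eqI iffI)
  fix w assume w: "w \<in> {w\<in>{0..<int (b*r)}. w mod int b = y}"
  then have "w = y + int b * (w div int b)" using mult_div_mod_eq[of "int b" w] by simp
  moreover have "w div int b \<in> {0..<int r}"
  proof -
    have "0 \<le> w div int b" using w assms by (simp add: pos_imp_zdiv_nonneg_iff)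
    moreover have "w div int b < int r"
    proof (rule ccontr)
      assume "\<not> w div int b < int r"
      then have "int b * int r \<le> int b * (w div int b)" using assms by (intro mult_left_mono) auto
      also have "\<dots> \<le> w" using mult_div_mod_eq[of "int b" w] pos_mod_sign[of "int b" w] assms by linarith
      finally show False using w by simp
    qed
    ultimately show ?thesis by simp
  qed
  ultimately show "w \<in> (\<lambda>t. y + int b * t) ` {0..<int r}" by blast
next
  fix w assume "w \<in> (\<lambda>t. y + int b * t) ` {0..<int r}"
  then obtain t where t: "0 \<le> t" "t < int r" "w = y + int b * t" by auto
  have "int b * t \<le> int b * (int r - 1)" using t assms by (intro mult_left_mono) auto
  then have "w < int (b*r)" using t assms by (simp add: algebra_simps)
  moreover have "w mod int b = y" using t assms by simp
  ultimately show "w \<in> {w\<in>{0..<int (b*r)}. w mod int b = y}" using t assms by auto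
qed

lemma resid_sum:
  fixes b r :: nat and y m :: int
  assumes "b > 0" "r > 0" "0 \<le> y" "y < int b"
  shows "(\<Sum>w\<in>{w\<in>{0..<int (b*r)}. w mod int b = y}. e (real_of_int (m * w) / real (b*r)))
         = (if int r dvd m then of_nat r * e (real_of_int ((m div int r) * y) / real b) else 0)"
proof -
  have inj: "inj_on (\<lambda>t. y + int b * t) {0..<int r}" using assms by (auto simp: inj_on_def)
  have "(\<Sum>w\<in>{w\<in>{0..<int (b*r)}. w mod int b = y}. e (real_of_int (m * w) / real (b*r)))
      = (\<Sum>t\<in>{0..<int r}. e (real_of_int (m * (y + int b * t)) / real (b*r)))"
    unfolding resid_set[OF assms(1,3,4)] by (simp add: sum.reindex[OF inj])
  also have "\<dots> = (\<Sum>t\<in>{0..<int r}. e (real_of_int (m * y) / real (b*r)) * e (real_of_int (t * m) / real r))"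
  proof (intro sum.cong refl)
    fix t
    have "real_of_int (m * (y + int b * t)) / real (b*r) = real_of_int (m * y) / real (b*r) + real_of_int (t * m) / real r"
      using assms by (simp add: field_simps)
    then show "e (real_of_int (m * (y + int b * t)) / real (b*r)) = e (real_of_int (m * y) / real (b*r)) * e (real_of_int (t * m) / real r)"
      by (simp add: e_add)
  qed
  also have "\<dots> = e (real_of_int (m * y) / real (b*r)) * (if int r dvd m then of_nat r else 0)"
    by (subst sum_distrib_left[symmetric], subst orth[OF assms(2)], rule refl)
  also have "\<dots> = (if int r dvd m then of_nat r * e (real_of_int ((m div int r) * y) / real b) else 0)"
  proof (cases "int r dvd m")
    case True
    then obtain k where k: "m = int r * k" by blast
    have "real_of_int (m * y) / real (b*r) = real_of_int ((m div int r) * y) / real b"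
      using assms k by (simp add: field_simps)
    then show ?thesis using True by simp
  qed simp
  finally show ?thesis .
qed

lemma group_pairs:
  fixes U :: "'a set" and V :: "'b set" and h :: "'a \<Rightarrow> 'b" and f g :: "'a \<Rightarrow> complex"
  assumes "finite U" "finite V" "h ` U \<subseteq> V"
  shows "(\<Sum>w\<in>U. \<Sum>w'\<in>U. if h w = h w' then f w * g w' else 0)
       = (\<Sum>y\<in>V. (\<Sum>w\<in>{w\<in>U. h w = y}. f w) * (\<Sum>w\<in>{w\<in>U. h w = y}. g w))"
proof -
  define G where "G y = (\<Sum>w\<in>{w\<in>U. h w = y}. g w)" for y
  have "(\<Sum>w\<in>U. \<Sum>w'\<in>U. if h w = h w' then f w * g w' else 0) = (\<Sum>w\<in>U. f w * G (h w))"
  proof (intro sum.cong refl)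
    fix w
    have "(\<Sum>w'\<in>U. if h w = h w' then f w * g w' else 0) = (\<Sum>w'\<in>{w'\<in>U. h w' = h w}. f w * g w')"
      using assms(1) by (simp add: sum.inter_filter eq_commute)
    then show "(\<Sum>w'\<in>U. if h w = h w' then f w * g w' else 0) = f w * G (h w)"
      by (simp add: G_def sum_distrib_left)
  qed
  also have "\<dots> = (\<Sum>y\<in>V. \<Sum>w\<in>{w\<in>U. h w = y}. f w * G (h w))"
    using sum.group[OF assms, of "\<lambda>w. f w * G (h w)"] by simp
  also have "\<dots> = (\<Sum>y\<in>V. (\<Sum>w\<in>{w\<in>U. h w = y}. f w) * G y)"
    by (intro sum.cong refl) (simp add: sum_distrib_right)
  finally show ?thesis by (simp add: G_def)
qed



lemma inv_cong:
  fixes a a' c c' n :: int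
  assumes "[a * a' = 1] (mod n)" "[c * c' = 1] (mod n)" "[a = c] (mod n)"
  shows "[a' = c'] (mod n)"
proof -
  have 1: "[a' * (c * c') = a' * 1] (mod n)" using cong_scalar_left[OF assms(2), of a'] .
  have 2: "[a' * (a * c') = a' * (c * c')] (mod n)" using cong_scalar_left[OF cong_scalar_right[OF assms(3), of c'], of a'] .
  have 3: "[(a * a') * c' = 1 * c'] (mod n)" using cong_scalar_right[OF assms(1), of c'] .
  have "[a' = a' * (c * c')] (mod n)" using cong_sym[OF 1] by simp
  also have "[a' * (c * c') = a' * (a * c')] (mod n)" using cong_sym[OF 2] .
  also have "a' * (a * c') = (a * a') * c'" by (simp add: ac_simps)
  also have "[(a * a') * c' = c'] (mod n)" using 3 by simp
  finally show ?thesis .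
qed

definition Pset :: "int \<Rightarrow> (int \<times> int) set" where
  "Pset N = {(x, xb). x \<in> {0..<N} \<and> xb \<in> {0..<N} \<and> (x * xb) mod N = 1 mod N}"

lemma Pset_cong: "p \<in> Pset N \<Longrightarrow> [fst p * snd p = 1] (mod N)"
  by (auto simp: Pset_def cong_def)

lemma Pset_fin: "finite (Pset N)"
  by (rule finite_subset[of _ "{0..<N} \<times> {0..<N}"]) (auto simp: Pset_def)

lemma Pset_modb:
  assumes "p \<in> Pset N" "q \<in> Pset N" "b dvd N"
  shows "fst p mod b = fst q mod b \<longleftrightarrow> snd p mod b = snd q mod b"
proof -
  have 1: "[fst p * snd p = 1] (mod b)" "[fst q * snd q = 1] (mod b)"
    using Pset_cong[OF assms(1)] Pset_cong[OF assms(2)] assms(3) cong_dvd_mono_modulus by blast+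
  have 2: "[snd p * fst p = 1] (mod b)" "[snd q * fst q = 1] (mod b)"
    using 1 by (simp_all add: mult.commute)
  show ?thesis
  proof
    assume "fst p mod b = fst q mod b"
    then have "[fst p = fst q] (mod b)" by (simp add: cong_def)
    from inv_cong[OF 1 this] show "snd p mod b = snd q mod b" by (simp add: cong_def)
  next
    assume "snd p mod b = snd q mod b"
    then have "[snd p = snd q] (mod b)" by (simp add: cong_def)
    from inv_cong[OF 2 this] show "fst p mod b = fst q mod b" by (simp add: cong_def)
  qed
qed

lemma Pset_inj: "inj_on snd (Pset N)"
proof (rule inj_onI)
  fix p q assume pq: "p \<in> Pset N" "q \<in> Pset N" "snd p = snd q"
  have "[snd p * fst p = 1] (mod N)" "[snd q * fst q = 1] (mod N)"
    using Pset_cong[OF pq(1)] Pset_cong[OF pq(2)] by (simp_all add: mult.commute)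
  moreover have "[snd p = snd q] (mod N)" using pq(3) by simp
  ultimately have "[fst p = fst q] (mod N)" by (rule inv_cong)
  moreover have "fst p \<in> {0..<N}" "fst q \<in> {0..<N}" using pq by (auto simp: Pset_def)
  ultimately have "fst p = fst q" by (auto simp: cong_def)
  then show "p = q" using pq(3) by (simp add: prod_eq_iff)
qed

lemma Pset_image: "snd ` Pset N = {w\<in>{0..<N}. coprime w N}"
proof (intro set_eqI iffI)
  fix w assume "w \<in> snd ` Pset N"
  then obtain p where p: "p \<in> Pset N" "w = snd p" by auto
  have "[w * fst p = 1] (mod N)" using Pset_cong[OF p(1)] p(2) by (simp add: mult.commute)
  then have "coprime w N" using coprime_iff_invertible_int[of w N] by blast
  moreover have "w \<in> {0..<N}" using p unfolding Pset_def by auto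
  ultimately show "w \<in> {w\<in>{0..<N}. coprime w N}" by simp
next
  fix w assume w: "w \<in> {w\<in>{0..<N}. coprime w N}"
  then have cw: "coprime w N" and w0: "0 \<le> w" "w < N" by auto
  obtain x where x: "[w * x = 1] (mod N)" using cw coprime_iff_invertible_int[of w N] by blast
  have N0: "N > 0" using w0 by simp
  have "(x mod N * w) mod N = 1 mod N"
    using x unfolding cong_def by (metis mod_mult_left_eq mult.commute)
  moreover have "x mod N \<in> {0..<N}" using N0 by simp
  ultimately have "(x mod N, w) \<in> Pset N" using w0 unfolding Pset_def by simp
  then show "w \<in> snd ` Pset N" by (rule image_eqI[rotated]) simp
qed


lemma copr_r:
  fixes w :: int and b r :: nat
  assumes "r > 0" "\<forall>p. prime p \<and> p dvd r \<longrightarrow> p dvd b" "coprime w (int b)"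
  shows "coprime w (int r)"
proof (rule ccontr)
  assume nc: "\<not> coprime w (int r)"
  have "gcd w (int r) \<noteq> 0" using assms by simp
  moreover have "\<not> is_unit (gcd w (int r))" using nc
    by (simp add: coprime_iff_gcd_eq_1)
  ultimately obtain p :: int where p: "prime p" "p dvd gcd w (int r)"
    using prime_divisor_exists by blast
  have "p \<ge> 0" using p prime_ge_0_int by blast
  have pn: "prime (nat p)" using p by simp
  have "p dvd int r" using p(2) by (meson dvd_trans gcd_dvd2)
  then have "nat p dvd r" using \<open>p \<ge> 0\<close> by (metis nat_dvd_iff nat_int)
  then have "nat p dvd b" using assms pn by blast
  then have "p dvd int b" using \<open>p \<ge> 0\<close> by (metis int_dvd_int_iff int_nat_eq)
  moreover have "p dvd w" using p(2) by (meson dvd_trans gcd_dvd1)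
  ultimately show False using assms(3) p(1)
    by (metis coprime_common_divisor not_prime_unit)
qed

lemma K_expand:
  assumes "b > 0" "r > 0"
  shows "kloosterman (int r * x) m (b*r) = (\<Sum>p\<in>Pset (int (b*r)).
           e (real_of_int (x * fst p) / real b) * e (real_of_int (m * snd p) / real (b*r)))"
  unfolding kloosterman_def Pset_def
proof (intro sum.cong refl)
  fix p :: "int \<times> int"
  have "real_of_int (int r * x * fst p + m * snd p) / real (b * r)
      = real_of_int (x * fst p) / real b + real_of_int (m * snd p) / real (b*r)"
    using assms by (simp add: field_simps)
  then show "e (real_of_int (int r * x * fst p + m * snd p) / real (b * r)) =
    e (real_of_int (x * fst p) / real b) * e (real_of_int (m * snd p) / real (b*r))"
    by (simp add: e_add)
qed

lemma xsum:
  fixes b :: nat and P :: "(int \<times> int) set" and F G :: "int \<times> int \<Rightarrow> complex"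
  assumes "b > 0" "finite P"
  shows "(\<Sum>x\<in>{0..<int b}. (\<Sum>p\<in>P. e (real_of_int (x * fst p) / real b) * F p)
           * cnj (\<Sum>q\<in>P. e (real_of_int (x * fst q) / real b) * G q))
       = of_nat b * (\<Sum>p\<in>P. \<Sum>q\<in>P. if fst p mod int b = fst q mod int b then F p * cnj (G q) else 0)"
proof -
  have "(\<Sum>x\<in>{0..<int b}. (\<Sum>p\<in>P. e (real_of_int (x * fst p) / real b) * F p)
           * cnj (\<Sum>q\<in>P. e (real_of_int (x * fst q) / real b) * G q))
      = (\<Sum>x\<in>{0..<int b}. \<Sum>p\<in>P. \<Sum>q\<in>P. e (real_of_int (x * (fst p - fst q)) / real b) * (F p * cnj (G q)))"
  proof (intro sum.cong refl)
    fix x :: int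
    show "(\<Sum>p\<in>P. e (real_of_int (x * fst p) / real b) * F p) * cnj (\<Sum>q\<in>P. e (real_of_int (x * fst q) / real b) * G q)
        = (\<Sum>p\<in>P. \<Sum>q\<in>P. e (real_of_int (x * (fst p - fst q)) / real b) * (F p * cnj (G q)))"
      unfolding cnj_sum sum_product
    proof (intro sum.cong refl)
      fix p q :: "int \<times> int"
      have "real_of_int (x * (fst p - fst q)) / real b = real_of_int (x * fst p) / real b + - (real_of_int (x * fst q) / real b)"
        by (simp add: diff_divide_distrib right_diff_distrib)
      then have h: "e (real_of_int (x * (fst p - fst q)) / real b) = e (real_of_int (x * fst p) / real b) * cnj (e (real_of_int (x * fst q) / real b))"
        by (simp only: e_add e_cnj)
      show "e (real_of_int (x * fst p) / real b) * F p * cnj (e (real_of_int (x * fst q) / real b) * G q)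
          = e (real_of_int (x * (fst p - fst q)) / real b) * (F p * cnj (G q))"
        unfolding h by (simp add: ac_simps)
    qed
  qed
  also have "\<dots> = (\<Sum>p\<in>P. \<Sum>q\<in>P. \<Sum>x\<in>{0..<int b}. e (real_of_int (x * (fst p - fst q)) / real b) * (F p * cnj (G q)))"
    by (subst sum.swap, rule sum.cong[OF refl], rule sum.swap)
  also have "\<dots> = (\<Sum>p\<in>P. \<Sum>q\<in>P. (if int b dvd (fst p - fst q) then of_nat b else 0) * (F p * cnj (G q)))"
    by (intro sum.cong refl, subst sum_distrib_right[symmetric], subst orth[OF assms(1)], rule refl)
  also have "\<dots> = of_nat b * (\<Sum>p\<in>P. \<Sum>q\<in>P. if fst p mod int b = fst q mod int b then F p * cnj (G q) else 0)"
    by (simp add: sum_distrib_left mod_eq_dvd_iff if_distrib if_distribR cong: if_cong)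
  finally show ?thesis .
qed



lemma setG:
  fixes b r :: nat and y :: int
  assumes "b > 0" "r > 0" "\<forall>p. prime p \<and> p dvd r \<longrightarrow> p dvd b"
    and "y \<in> {y\<in>{0..<int b}. coprime y (int b)}"
  shows "{w\<in>{w\<in>{0..<int (b*r)}. coprime w (int (b*r))}. w mod int b = y} = {w\<in>{0..<int (b*r)}. w mod int b = y}"
proof (intro set_eqI iffI)
  fix w assume w: "w \<in> {w\<in>{0..<int (b*r)}. w mod int b = y}"
  then have "coprime (w mod int b) (int b)" using assms(4) by simp
  then have cb: "coprime w (int b)" using assms(1) by simp
  then have "coprime w (int r)" using copr_r assms by blast
  with cb have "coprime w (int (b*r))" by simp
  then show "w \<in> {w\<in>{w\<in>{0..<int (b*r)}. coprime w (int (b*r))}. w mod int b = y}" using w by simp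
qed auto

lemma imgU:
  fixes b r :: nat
  assumes "b > 0"
  shows "(\<lambda>w. w mod int b) ` {w\<in>{0..<int (b*r)}. coprime w (int (b*r))} \<subseteq> {y\<in>{0..<int b}. coprime y (int b)}"
proof
  fix y assume "y \<in> (\<lambda>w. w mod int b) ` {w\<in>{0..<int (b*r)}. coprime w (int (b*r))}"
  then obtain w where w: "coprime w (int (b*r))" "y = w mod int b" by auto
  then have "coprime w (int b)" by simp
  then show "y \<in> {y\<in>{0..<int b}. coprime y (int b)}" using w assms by simp
qed

lemma KK:
  fixes b r :: nat and m m' :: int
  assumes "b > 0" "r > 0" "\<forall>p. prime p \<and> p dvd r \<longrightarrow> p dvd b"
  shows "(\<Sum>x\<in>{0..<int b}. kloosterman (int r * x) m (b*r) * cnj (kloosterman (int r * x) m' (b*r)))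
    = of_nat b * (\<Sum>y\<in>{y\<in>{0..<int b}. coprime y (int b)}.
         (\<Sum>w\<in>{w\<in>{0..<int (b*r)}. w mod int b = y}. e (real_of_int (m * w) / real (b*r)))
         * cnj (\<Sum>w\<in>{w\<in>{0..<int (b*r)}. w mod int b = y}. e (real_of_int (m' * w) / real (b*r))))"
proof -
  define N where "N = int (b*r)"
  define P where "P = Pset N"
  define U where "U = {w\<in>{0..<N}. coprime w N}"
  define Ub where "Ub = {y\<in>{0..<int b}. coprime y (int b)}"
  define F where "F k w = e (real_of_int (k * w) / real (b*r))" for k w :: int
  have finP: "finite P" by (simp add: P_def Pset_fin)
  have finU: "finite U" unfolding U_def by (rule finite_subset[of _ "{0..<N}"]) auto
  have bN: "int b dvd N" by (simp add: N_def)
  have re: "sum g U = (\<Sum>p\<in>P. g (snd p))" for g :: "int \<Rightarrow> complex"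
    unfolding U_def P_def Pset_image[symmetric] by (simp add: sum.reindex[OF Pset_inj])
  have "(\<Sum>x\<in>{0..<int b}. kloosterman (int r * x) m (b*r) * cnj (kloosterman (int r * x) m' (b*r)))
      = (\<Sum>x\<in>{0..<int b}. (\<Sum>p\<in>P. e (real_of_int (x * fst p) / real b) * F m (snd p))
           * cnj (\<Sum>q\<in>P. e (real_of_int (x * fst q) / real b) * F m' (snd q)))"
    unfolding K_expand[OF assms(1,2)] P_def N_def F_def by simp
  also have "\<dots> = of_nat b * (\<Sum>p\<in>P. \<Sum>q\<in>P. if fst p mod int b = fst q mod int b then F m (snd p) * cnj (F m' (snd q)) else 0)"
    by (rule xsum[OF assms(1) finP])
  also have "(\<Sum>p\<in>P. \<Sum>q\<in>P. if fst p mod int b = fst q mod int b then F m (snd p) * cnj (F m' (snd q)) else 0)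
     = (\<Sum>p\<in>P. \<Sum>q\<in>P. if snd p mod int b = snd q mod int b then F m (snd p) * cnj (F m' (snd q)) else 0)"
    using Pset_modb[OF _ _ bN] unfolding P_def by (intro sum.cong refl) simp
  also have "\<dots> = (\<Sum>w\<in>U. \<Sum>w'\<in>U. if w mod int b = w' mod int b then F m w * cnj (F m' w') else 0)"
    by (simp add: re)
  also have "\<dots> = (\<Sum>y\<in>Ub. (\<Sum>w\<in>{w\<in>U. w mod int b = y}. F m w) * (\<Sum>w\<in>{w\<in>U. w mod int b = y}. cnj (F m' w)))"
    by (rule group_pairs[OF finU]) (use imgU[OF assms(1), of r] in \<open>auto simp: U_def Ub_def N_def intro: finite_subset[of _ "{0..<int b}"]\<close>)
  also have "\<dots> = (\<Sum>y\<in>Ub. (\<Sum>w\<in>{w\<in>{0..<int (b*r)}. w mod int b = y}. F m w) * cnj (\<Sum>w\<in>{w\<in>{0..<int (b*r)}. w mod int b = y}. F m' w))"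
  proof (intro sum.cong refl)
    fix y assume "y \<in> Ub"
    then have "{w\<in>U. w mod int b = y} = {w\<in>{0..<int (b*r)}. w mod int b = y}"
      unfolding U_def N_def Ub_def using setG[OF assms] by blast
    then show "(\<Sum>w\<in>{w\<in>U. w mod int b = y}. F m w) * (\<Sum>w\<in>{w\<in>U. w mod int b = y}. cnj (F m' w))
      = (\<Sum>w\<in>{w\<in>{0..<int (b*r)}. w mod int b = y}. F m w) * cnj (\<Sum>w\<in>{w\<in>{0..<int (b*r)}. w mod int b = y}. F m' w)"
      by simp
  qed
  finally show ?thesis by (simp add: F_def Ub_def)
qed



theorem lemma11p2:
  fixes b r M :: nat and c :: "nat \<Rightarrow> complex"
  assumes "b > 0" and "r > 0"
    and "\<forall>p. prime p \<and> p dvd r \<longrightarrow> p dvd b"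
  shows "(\<Sum>x\<in>{0..<int b}.
            (cmod (\<Sum>m\<in>{1..M}. c m * kloosterman (int r * x) (int m) (b * r)))\<^sup>2)
       = real b * (real r)\<^sup>2 *
         (\<Sum>y\<in>{y\<in>{0..<int b}. coprime y (int b)}.
            (cmod (\<Sum>m\<in>{m\<in>{1..M}. r dvd m}.
                c m * e (real_of_int (y * int (m div r)) / real b)))\<^sup>2)"
proof -
  define Ub where "Ub = {y\<in>{0..<int b}. coprime y (int b)}"
  define K where "K x m = kloosterman (int r * x) (int m) (b * r)" for x :: int and m :: nat
  define A where "A m y = (\<Sum>w\<in>{w\<in>{0..<int (b*r)}. w mod int b = y}. e (real_of_int (int m * w) / real (b*r)))" for m :: nat and y :: int
  define E where "E m y = e (real_of_int (y * int (m div r)) / real b)" for m :: nat and y :: int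
  have finUb: "finite Ub" unfolding Ub_def by (rule finite_subset[of _ "{0..<int b}"]) auto
  have AE: "A m y = of_nat r * (if r dvd m then E m y else 0)" if "y \<in> Ub" for m y
  proof -
    have y: "0 \<le> y" "y < int b" using that by (auto simp: Ub_def)
    have "A m y = (if int r dvd int m then of_nat r * e (real_of_int ((int m div int r) * y) / real b) else 0)"
      unfolding A_def by (rule resid_sum[OF assms(1,2) y])
    also have "(int m div int r) * y = y * int (m div r)" by (simp add: zdiv_int mult.commute)
    finally show ?thesis by (simp add: E_def)
  qed
  have KKm: "(\<Sum>x\<in>{0..<int b}. K x m * cnj (K x m')) = of_nat b * (\<Sum>y\<in>Ub. A m y * cnj (A m' y))" for m m'
    unfolding K_def A_def Ub_def by (rule KK[OF assms])
  have "complex_of_real (\<Sum>x\<in>{0..<int b}. (cmod (\<Sum>m\<in>{1..M}. c m * K x m))\<^sup>2)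
      = (\<Sum>x\<in>{0..<int b}. (\<Sum>m\<in>{1..M}. c m * K x m) * cnj (\<Sum>m\<in>{1..M}. c m * K x m))"
    by (simp only: of_real_sum complex_norm_square)
  also have "\<dots> = (\<Sum>x\<in>{0..<int b}. \<Sum>m\<in>{1..M}. \<Sum>m'\<in>{1..M}. (c m * cnj (c m')) * (K x m * cnj (K x m')))"
    by (simp add: sum_product ac_simps)
  also have "\<dots> = (\<Sum>m\<in>{1..M}. \<Sum>m'\<in>{1..M}. (c m * cnj (c m')) * (\<Sum>x\<in>{0..<int b}. K x m * cnj (K x m')))"
    by (subst sum.swap, rule sum.cong[OF refl], subst sum.swap, simp add: sum_distrib_left)
  also have "\<dots> = (\<Sum>m\<in>{1..M}. \<Sum>m'\<in>{1..M}. (c m * cnj (c m')) * (of_nat b * (\<Sum>y\<in>Ub. A m y * cnj (A m' y))))"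
    by (simp add: KKm)
  also have "\<dots> = of_nat b * (\<Sum>y\<in>Ub. \<Sum>m\<in>{1..M}. \<Sum>m'\<in>{1..M}. (c m * A m y) * cnj (c m' * A m' y))"
    by (simp add: sum_distrib_left ac_simps) (subst sum.swap, rule sum.cong[OF refl], subst sum.swap, simp)
  also have "\<dots> = of_nat b * (\<Sum>y\<in>Ub. (\<Sum>m\<in>{1..M}. c m * A m y) * cnj (\<Sum>m\<in>{1..M}. c m * A m y))"
    by (simp add: sum_product)
  also have "\<dots> = of_nat b * (of_nat r)\<^sup>2 * (\<Sum>y\<in>Ub. (\<Sum>m\<in>{m\<in>{1..M}. r dvd m}. c m * E m y) * cnj (\<Sum>m\<in>{m\<in>{1..M}. r dvd m}. c m * E m y))"
  proof -
    have "(\<Sum>m\<in>{1..M}. c m * A m y) = of_nat r * (\<Sum>m\<in>{m\<in>{1..M}. r dvd m}. c m * E m y)" if "y \<in> Ub" for y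
    proof -
      have "(\<Sum>m\<in>{1..M}. c m * A m y) = (\<Sum>m\<in>{1..M}. if r dvd m then of_nat r * (c m * E m y) else 0)"
        by (intro sum.cong refl) (simp add: AE that)
      also have "\<dots> = (\<Sum>m\<in>{m\<in>{1..M}. r dvd m}. of_nat r * (c m * E m y))"
        by (rule sum.inter_filter[symmetric]) simp
      finally show ?thesis by (simp add: sum_distrib_left)
    qed
    then show ?thesis
      by (simp add: sum_distrib_left power2_eq_square ac_simps)
  qed
  also have "\<dots> = complex_of_real (real b * (real r)\<^sup>2 * (\<Sum>y\<in>Ub. (cmod (\<Sum>m\<in>{m\<in>{1..M}. r dvd m}. c m * E m y))\<^sup>2))"
    by (simp only: of_real_sum complex_norm_square of_real_mult) simp
  finally show ?thesis unfolding K_def E_def Ub_def of_real_eq_iff .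
qed


end
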